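(* Let $G$ be a fixed graph, $k$ an integer, and $G_0,G_1,\dots,G_r=G$ a sequence of graphs on the same vertex set where $G_i$ is obtained from $G_{i+1}$ by deleting an edge $\{v_i,u_i\}$. Assume that for some $\alpha\in[0,1]$, for every $i=0,\dots,r-1$ and all $c,q\in[k]$ with $c\ne q$, the set $\Omega_i(c,c)$ is $\alpha$-isomorphic to $\Omega_i(q,c)$ with $\alpha$-function $H_i(\cdot,q)$. Let $\mu$ be the uniform distribution over the $k$-colourings of $G$ and $\mu'$ the distribution of the colouring $Y_r$ returned by the procedure described in the context. Then $\|\mu-\mu'\|\le r\cdot\alpha$.
   Context: $[k]=\{1,\dots,k\}$; $\Omega_i$ is the set of proper $k$-colourings of $G_i$ and $\Omega_i(c,q)$ the set of those assigning colour $c$ to $v_i$ and $q$ to $u_i$. $\|\nu_a-\nu_b\|=\max_A|\nu_a(A)-\nu_b(A)|$. For $\sigma\in\Omega_i$ and $q\ne\sigma_{v_i}$, the disagreement graph $Q$ is the subgraph of $G_i$ induced by all vertices reachable from $v_i$ by a path in $G_i$ whose vertices all have colours in $\{\sigma_{v_i},q\}$; $H_i(\sigma,q)$ is obtained from $\sigma$ by swapping colours $\sigma_{v_i}$ and $q$ on the vertices of $Q$. $\Omega'$ is $\alpha$-isomorphic to $\Omega''$ if there exist $A\subseteq\Omega'$, $B\subseteq\Omega''$ with $|A|\ge(1-\alpha)|\Omega'|$, $|B|\ge(1-\alpha)|\Omega''|$ and a bijection $h:A\to B$; a map $F$ on $\Omega'$ is an $\alpha$-function if $F=h$ on $A$ for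 such $A,B,h$. Procedure: $Y_0$ is uniformly distributed over $\Omega_0$; for $i=0,\dots,r-1$, if $Y_i(v_i)\ne Y_i(u_i)$ set $Y_{i+1}=Y_i$, otherwise choose $q$ uniformly from $[k]\setminus\{Y_i(v_i)\}$ and set $Y_{i+1}=H_i(Y_i,q)$. Output $Y_r$. *)

theory Defs
  imports "HOL-Probability.Probability"
begin

text \<open>Graphs on a finite vertex set V are given by their edge sets (sets of 2-element sets).
  Colourings are functions 'a => nat, extensional on V (value undefined outside V).\<close>

definition proper :: "'a set set \<Rightarrow> ('a \<Rightarrow> nat) \<Rightarrow> bool" where
  "proper E \<sigma> \<longleftrightarrow> (\<forall>x y. {x, y} \<in> E \<longrightarrow> x \<noteq> y \<longrightarrow> \<sigma> x \<noteq> \<sigma> y)"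

definition colourings :: "'a set \<Rightarrow> nat \<Rightarrow> 'a set set \<Rightarrow> ('a \<Rightarrow> nat) set" where
  "colourings V k E = {\<sigma> \<in> V \<rightarrow>\<^sub>E {1..k}. proper E \<sigma>}"

definition colourings_vu ::
  "'a set \<Rightarrow> nat \<Rightarrow> 'a set set \<Rightarrow> 'a \<Rightarrow> 'a \<Rightarrow> nat \<Rightarrow> nat \<Rightarrow> ('a \<Rightarrow> nat) set" where
  "colourings_vu V k E v u c q = {\<sigma> \<in> colourings V k E. \<sigma> v = c \<and> \<sigma> u = q}"

inductive_set reach :: "'a set set \<Rightarrow> ('a \<Rightarrow> nat) \<Rightarrow> nat set \<Rightarrow> 'a \<Rightarrow> 'a set"
  for E \<sigma> S v where
  start: "\<sigma> v \<in> S \<Longrightarrow> v \<in> reach E \<sigma> S v"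
| step: "x \<in> reach E \<sigma> S v \<Longrightarrow> {x, y} \<in> E \<Longrightarrow> \<sigma> y \<in> S \<Longrightarrow> y \<in> reach E \<sigma> S v"

definition disagreement :: "'a set set \<Rightarrow> 'a \<Rightarrow> ('a \<Rightarrow> nat) \<Rightarrow> nat \<Rightarrow> 'a set" where
  "disagreement E v \<sigma> q = reach E \<sigma> {\<sigma> v, q} v"

definition swapH :: "'a set set \<Rightarrow> 'a \<Rightarrow> ('a \<Rightarrow> nat) \<Rightarrow> nat \<Rightarrow> ('a \<Rightarrow> nat)" where
  "swapH E v \<sigma> q = (\<lambda>x. if x \<in> disagreement E v \<sigma> q then
       (if \<sigma> x = \<sigma> v then q else if \<sigma> x = q then \<sigma> v else \<sigma> x) else \<sigma> x)"

definition alpha_iso_with :: "real \<Rightarrow> 'b set \<Rightarrow> 'c set \<Rightarrow> ('b \<Rightarrow> 'c) \<Rightarrow> bool" where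
  "alpha_iso_with \<alpha> \<Omega>1 \<Omega>2 F \<longleftrightarrow>
     (\<exists>A B h. A \<subseteq> \<Omega>1 \<and> B \<subseteq> \<Omega>2 \<and>
        real (card A) \<ge> (1 - \<alpha>) * real (card \<Omega>1) \<and>
        real (card B) \<ge> (1 - \<alpha>) * real (card \<Omega>2) \<and>
        bij_betw h A B \<and> (\<forall>x\<in>A. F x = h x))"

definition tv_dist :: "'b pmf \<Rightarrow> 'b pmf \<Rightarrow> real" where
  "tv_dist p p' = (SUP A. \<bar>measure_pmf.prob p A - measure_pmf.prob p' A\<bar>)"

definition proc_step :: "nat \<Rightarrow> 'a set set \<Rightarrow> 'a \<Rightarrow> 'a \<Rightarrow> ('a \<Rightarrow> nat) \<Rightarrow> ('a \<Rightarrow> nat) pmf" where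
  "proc_step k E v u \<sigma> =
     (if \<sigma> v \<noteq> \<sigma> u then return_pmf \<sigma>
      else map_pmf (\<lambda>q. swapH E v \<sigma> q) (pmf_of_set ({1..k} - {\<sigma> v})))"

fun procY :: "'a set \<Rightarrow> nat \<Rightarrow> (nat \<Rightarrow> 'a set set) \<Rightarrow> (nat \<Rightarrow> 'a) \<Rightarrow> (nat \<Rightarrow> 'a) \<Rightarrow> nat
               \<Rightarrow> ('a \<Rightarrow> nat) pmf" where
  "procY V k G v u 0 = pmf_of_set (colourings V k (G 0))"
| "procY V k G v u (Suc i) = bind_pmf (procY V k G v u i) (proc_step k (G i) (v i) (u i))"

end

theory Submission
  imports Defs
begin


lemma pmf_bind_lower:
  assumes "finite F"
  shows "(\<Sum>x\<in>F. pmf p x * pmf (K x) t) \<le> pmf (bind_pmf p K) t"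
proof -
  have "(\<Sum>x\<in>F. pmf p x * pmf (K x) t) = (\<integral>x. pmf (K x) t * indicator F x \<partial>measure_pmf p)"
    by (subst integral_measure_pmf_real[where A=F]) (auto simp: assms mult.commute indicator_def)
  also have "\<dots> \<le> (\<integral>x. pmf (K x) t \<partial>measure_pmf p)"
    by (rule integral_mono) (auto intro!: measure_pmf.integrable_const_bound[where B=1] pmf_le_1 split: split_indicator)
  finally show ?thesis by (simp add: pmf_bind)
qed

lemma finite_colourings: "finite V \<Longrightarrow> finite (colourings V k E)"
  unfolding colourings_def by (rule finite_subset[of _ "V \<rightarrow>\<^sub>E {1..k}"]) (auto intro: finite_PiE)

lemma colourings_anti: "E \<subseteq> E' \<Longrightarrow> colourings V k E' \<subseteq> colourings V k E"
  unfolding colourings_def proper_def by blast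

lemma colourings_insert:
  assumes "v \<noteq> u"
  shows "colourings V k (insert {v,u} E) = {\<sigma>\<in>colourings V k E. \<sigma> v \<noteq> \<sigma> u}"
  unfolding colourings_def proper_def using assms by (auto simp: doubleton_eq_iff)

lemma sum_pmf_le1: "finite S \<Longrightarrow> sum (pmf p) S \<le> 1"
  by (metis measure_measure_pmf_finite measure_pmf.prob_le_1)

lemma tv_one_side:
  assumes "finite \<Omega>" "\<Omega> \<noteq> {}"
  shows "measure_pmf.prob (pmf_of_set \<Omega>) A - measure_pmf.prob p A
           \<le> (\<Sum>t\<in>\<Omega>. max 0 (1 / card \<Omega> - pmf p t))"
proof -
  have "measure_pmf.prob (pmf_of_set \<Omega>) A = (\<Sum>t\<in>\<Omega>\<inter>A. 1 / card \<Omega>)"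
    using assms by (simp add: measure_pmf_of_set)
  moreover have "(\<Sum>t\<in>\<Omega>\<inter>A. pmf p t) \<le> measure_pmf.prob p A"
    using assms by (metis inf_le2 measure_measure_pmf_finite finite_Int measure_pmf.finite_measure_mono sets_measure_pmf UNIV_I)
  moreover have "(\<Sum>t\<in>\<Omega>\<inter>A. 1 / card \<Omega> - pmf p t) \<le> (\<Sum>t\<in>\<Omega>\<inter>A. max 0 (1 / card \<Omega> - pmf p t))"
    by (rule sum_mono) simp
  moreover have "\<dots> \<le> (\<Sum>t\<in>\<Omega>. max 0 (1 / card \<Omega> - pmf p t))"
    by (rule sum_mono2) (auto simp: assms)
  ultimately show ?thesis by (simp add: sum_subtractf)
qed

lemma tv_bound:
  assumes "finite \<Omega>" "\<Omega> \<noteq> {}"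
  shows "tv_dist (pmf_of_set \<Omega>) p \<le> (\<Sum>t\<in>\<Omega>. max 0 (1 / card \<Omega> - pmf p t))"
  unfolding tv_dist_def
proof (rule cSUP_least)
  fix A
  have 1: "measure_pmf.prob (pmf_of_set \<Omega>) A - measure_pmf.prob p A \<le> (\<Sum>t\<in>\<Omega>. max 0 (1 / card \<Omega> - pmf p t))"
    by (rule tv_one_side[OF assms])
  have 2: "measure_pmf.prob (pmf_of_set \<Omega>) (-A) - measure_pmf.prob p (-A) \<le> (\<Sum>t\<in>\<Omega>. max 0 (1 / card \<Omega> - pmf p t))"
    by (rule tv_one_side[OF assms])
  have "measure_pmf.prob q (-A) = 1 - measure_pmf.prob q A" for q :: "'a pmf"
    using measure_pmf.prob_compl[of A q] by (simp add: Compl_eq_Diff_UNIV)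
  with 1 2 show "\<bar>measure_pmf.prob (pmf_of_set \<Omega>) A - measure_pmf.prob p A\<bar> \<le> (\<Sum>t\<in>\<Omega>. max 0 (1 / card \<Omega> - pmf p t))"
    by auto
qed simp

lemma propagate:
  fixes W W' :: "'b set" and p :: "'b pmf" and K :: "'b \<Rightarrow> 'b pmf"
  assumes fin: "finite W" "finite W'"
  shows "(\<Sum>t\<in>W'. max 0 (1 / card W' - pmf (bind_pmf p K) t))
     \<le> (\<Sum>t\<in>W'. max 0 (1 / card W' - (\<Sum>s\<in>W. pmf (K s) t) / card W))
       + (\<Sum>s\<in>W. max 0 (1 / card W - pmf p s))"
proof -
  define d where "d s = max 0 (1 / card W - pmf p s)" for s
  have pt: "max 0 (1 / card W' - pmf (bind_pmf p K) t)
      \<le> max 0 (1 / card W' - (\<Sum>s\<in>W. pmf (K s) t) / card W) + (\<Sum>s\<in>W. d s * pmf (K s) t)" for t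
  proof -
    have "(\<Sum>s\<in>W. pmf (K s) t) / card W - (\<Sum>s\<in>W. d s * pmf (K s) t) = (\<Sum>s\<in>W. (1 / card W - d s) * pmf (K s) t)"
      by (simp add: sum_divide_distrib sum_subtractf left_diff_distrib)
    also have "\<dots> \<le> (\<Sum>s\<in>W. pmf p s * pmf (K s) t)"
      by (rule sum_mono, rule mult_right_mono) (auto simp: d_def)
    also have "\<dots> \<le> pmf (bind_pmf p K) t" by (rule pmf_bind_lower[OF fin(1)])
    finally have "(\<Sum>s\<in>W. pmf (K s) t) / card W - (\<Sum>s\<in>W. d s * pmf (K s) t) \<le> pmf (bind_pmf p K) t" .
    moreover have "0 \<le> (\<Sum>s\<in>W. d s * pmf (K s) t)" by (auto intro!: sum_nonneg simp: d_def)
    ultimately show ?thesis by linarith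
  qed
  have "(\<Sum>t\<in>W'. max 0 (1 / card W' - pmf (bind_pmf p K) t))
      \<le> (\<Sum>t\<in>W'. max 0 (1 / card W' - (\<Sum>s\<in>W. pmf (K s) t) / card W) + (\<Sum>s\<in>W. d s * pmf (K s) t))"
    by (rule sum_mono[OF pt])
  also have "\<dots> = (\<Sum>t\<in>W'. max 0 (1 / card W' - (\<Sum>s\<in>W. pmf (K s) t) / card W)) + (\<Sum>s\<in>W. d s * (\<Sum>t\<in>W'. pmf (K s) t))"
    by (simp add: sum.distrib sum_distrib_left sum.swap[of _ W' W])
  also have "(\<Sum>s\<in>W. d s * (\<Sum>t\<in>W'. pmf (K s) t)) \<le> (\<Sum>s\<in>W. d s)"
    by (rule sum_mono) (auto simp: d_def intro!: mult_left_le sum_pmf_le1 fin)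
  finally show ?thesis by (simp add: d_def)
qed


lemma step_pmf_swap:
  assumes "s0 v = c" "s0 u = c" "q \<in> {1..k}" "c \<in> {1..k}" "q \<noteq> c" "swapH E v s0 q = t"
  shows "1 / (real k - 1) \<le> pmf (proc_step k E v u s0) t"
proof -
  let ?S = "{1..k} - {c}"
  have cS: "card ?S = k - 1" using assms by simp
  have k2: "k \<ge> 2" using assms by auto
  have fin: "finite ?S" "?S \<noteq> {}" using assms by auto
  have "pmf (proc_step k E v u s0) t = measure_pmf.prob (pmf_of_set ?S) (swapH E v s0 -` {t})"
    using assms by (simp add: proc_step_def pmf_map)
  also have "\<dots> = card (?S \<inter> swapH E v s0 -` {t}) / card ?S"
    using fin by (simp add: measure_pmf_of_set)
  finally have eq: "pmf (proc_step k E v u s0) t = card (?S \<inter> swapH E v s0 -` {t}) / card ?S" .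
  have "q \<in> ?S \<inter> swapH E v s0 -` {t}" using assms by auto
  hence "card (?S \<inter> swapH E v s0 -` {t}) \<ge> 1"
    using fin by (metis One_nat_def Suc_leI card_gt_0_iff empty_iff finite_Int)
  hence "real (card (?S \<inter> swapH E v s0 -` {t})) \<ge> 1" by simp
  moreover have "real (card ?S) = real k - 1" using cS k2 by simp
  moreover have "real k - 1 > 0" using k2 by simp
  ultimately show ?thesis unfolding eq by (simp add: divide_right_mono)
qed

lemma step_pmf_self:
  assumes "t v \<noteq> t u" shows "pmf (proc_step k E v u t) t = 1"
  using assms by (simp add: proc_step_def)


lemma comb:
  fixes W :: "('a \<Rightarrow> nat) set" and \<alpha> :: real
  assumes finW: "finite W"
    and W'def: "W' = {\<sigma>\<in>W. \<sigma> v \<noteq> \<sigma> u}" and ne: "W' \<noteq> {}"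
    and range: "\<forall>\<sigma>\<in>W. \<sigma> v \<in> {1..k} \<and> \<sigma> u \<in> {1..k}"
    and alpha: "0 \<le> \<alpha>" "\<alpha> \<le> 1"
    and iso: "\<forall>c\<in>{1..k}. \<forall>q\<in>{1..k}. c \<noteq> q \<longrightarrow> alpha_iso_with \<alpha> {\<sigma>\<in>W. \<sigma> v = c \<and> \<sigma> u = c}
                 {\<sigma>\<in>W. \<sigma> v = q \<and> \<sigma> u = c} (\<lambda>\<sigma>. swapH E v \<sigma> q)"
  shows "(\<Sum>t\<in>W'. max 0 (1 / card W' - (\<Sum>s\<in>W. pmf (proc_step k E v u s) t) / card W)) \<le> \<alpha>"
proof -
  define P where "P = Sigma {1..k} (\<lambda>c. {1..k} - {c})"
  define Om where "Om p = {\<sigma>\<in>W. \<sigma> v = snd p \<and> \<sigma> u = fst p}" for p :: "nat \<times> nat"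
  define Oa where "Oa p = {\<sigma>\<in>W. \<sigma> v = fst p \<and> \<sigma> u = fst p}" for p :: "nat \<times> nat"
  define key where "key t = (t u, t v)" for t :: "'a \<Rightarrow> nat"
  have finP: "finite P" unfolding P_def by auto
  have W'W: "W' \<subseteq> W" using W'def by auto
  have finW': "finite W'" using finite_subset[OF W'W finW] .
  have "\<forall>p\<in>P. \<exists>x. fst x \<subseteq> Oa p \<and> fst (snd x) \<subseteq> Om p \<and> real (card (fst x)) \<ge> (1-\<alpha>) * real (card (Oa p))
      \<and> real (card (fst (snd x))) \<ge> (1-\<alpha>) * real (card (Om p)) \<and> bij_betw (snd (snd x)) (fst x) (fst (snd x))
      \<and> (\<forall>\<sigma>\<in>fst x. swapH E v \<sigma> (snd p) = snd (snd x) \<sigma>)"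
  proof
    fix p assume "p \<in> P"
    then obtain c q where p: "p = (c,q)" "c \<in> {1..k}" "q \<in> {1..k}" "c \<noteq> q" unfolding P_def by force
    with iso have "alpha_iso_with \<alpha> (Oa p) (Om p) (\<lambda>\<sigma>. swapH E v \<sigma> q)"
      unfolding Oa_def Om_def by auto
    then obtain A B h where "A \<subseteq> Oa p" "B \<subseteq> Om p" "real (card A) \<ge> (1-\<alpha>) * real (card (Oa p))"
      "real (card B) \<ge> (1-\<alpha>) * real (card (Om p))" "bij_betw h A B" "\<forall>x\<in>A. swapH E v x q = h x"
      unfolding alpha_iso_with_def by blast
    then show "\<exists>x. fst x \<subseteq> Oa p \<and> fst (snd x) \<subseteq> Om p \<and> real (card (fst x)) \<ge> (1-\<alpha>) * real (card (Oa p))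
      \<and> real (card (fst (snd x))) \<ge> (1-\<alpha>) * real (card (Om p)) \<and> bij_betw (snd (snd x)) (fst x) (fst (snd x))
      \<and> (\<forall>\<sigma>\<in>fst x. swapH E v \<sigma> (snd p) = snd (snd x) \<sigma>)"
      using p by (intro exI[of _ "(A,B,h)"]) auto
  qed
  then obtain f where f: "\<forall>p\<in>P. fst (f p) \<subseteq> Oa p \<and> fst (snd (f p)) \<subseteq> Om p \<and> real (card (fst (f p))) \<ge> (1-\<alpha>) * real (card (Oa p))
      \<and> real (card (fst (snd (f p)))) \<ge> (1-\<alpha>) * real (card (Om p)) \<and> bij_betw (snd (snd (f p))) (fst (f p)) (fst (snd (f p)))
      \<and> (\<forall>\<sigma>\<in>fst (f p). swapH E v \<sigma> (snd p) = snd (snd (f p)) \<sigma>)"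
    by (rule bchoice[THEN exE]) blast
  define A where "A p = fst (f p)" for p
  define B where "B p = fst (snd (f p))" for p
  define h where "h p = snd (snd (f p))" for p
  have AOa: "A p \<subseteq> Oa p" and BOm: "B p \<subseteq> Om p" and cA: "real (card (A p)) \<ge> (1-\<alpha>) * real (card (Oa p))"
    and cB: "real (card (B p)) \<ge> (1-\<alpha>) * real (card (Om p))" and bij: "bij_betw (h p) (A p) (B p)"
    and hsw: "\<forall>\<sigma>\<in>A p. swapH E v \<sigma> (snd p) = h p \<sigma>" if "p \<in> P" for p
    using f that unfolding A_def B_def h_def by auto
  have finOm: "finite (Om p)" for p unfolding Om_def using finW by auto
  have finOa: "finite (Oa p)" for p unfolding Oa_def using finW by auto
  obtain t0 where t0: "t0 \<in> W'" using ne by auto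
  have k2: "k \<ge> 2" using t0 range W'def by auto
  define N where "N = real (card W')"
  define M where "M = real (card W)"
  define kk where "kk = real k - 1"
  have kk1: "kk \<ge> 1" using k2 unfolding kk_def by simp
  have Npos: "N > 0" unfolding N_def using finW' ne by (simp add: card_gt_0_iff)
  have NM: "N \<le> M" unfolding N_def M_def using card_mono[OF finW W'W] by simp
  have Mpos: "M > 0" using Npos NM by simp
  define gT where "gT = max 0 (1/N - 1/M - 1/(M*kk))"
  define gF where "gF = 1/N - 1/M"
  define b where "b t = (t \<in> B (key t))" for t
  have keyP: "key t \<in> P" if "t \<in> W'" for t
    using that range W'def unfolding key_def P_def by auto
  have lower: "(\<Sum>s\<in>W. pmf (proc_step k E v u s) t) \<ge> 1 + (if b t then 1 / kk else 0)" if tW: "t \<in> W'" for t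
  proof -
    have tvu: "t v \<noteq> t u" and tW0: "t \<in> W" using tW W'def by auto
    have nn: "\<And>s. 0 \<le> pmf (proc_step k E v u s) t" by simp
    show ?thesis
    proof (cases "b t")
      case True
      let ?p = "key t"
      have pP: "?p \<in> P" using keyP[OF tW] .
      have "t \<in> B ?p" using True unfolding b_def .
      then obtain s0 where s0: "s0 \<in> A ?p" "h ?p s0 = t"
        using bij[OF pP] by (metis bij_betw_imp_surj_on imageE)
      have s0O: "s0 \<in> Oa ?p" using AOa[OF pP] s0(1) by auto
      hence s0W: "s0 \<in> W" and s0v: "s0 v = t u" and s0u: "s0 u = t u" unfolding Oa_def key_def by auto
      have sw: "swapH E v s0 (t v) = t" using hsw[OF pP] s0 unfolding key_def by auto
      have ne0: "s0 \<noteq> t" using s0v tvu by auto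
      have p1: "pmf (proc_step k E v u t) t = 1" by (rule step_pmf_self[where t=t and v=v and u=u, OF tvu])
      have p2: "1 / (real k - 1) \<le> pmf (proc_step k E v u s0) t"
        by (rule step_pmf_swap[OF s0v s0u _ _ _ sw]) (use range tW0 tvu in auto)
      have "(\<Sum>s\<in>{t,s0}. pmf (proc_step k E v u s) t) \<le> (\<Sum>s\<in>W. pmf (proc_step k E v u s) t)"
        by (rule sum_mono2) (use finW tW0 s0W in auto)
      moreover have "(\<Sum>s\<in>{t,s0}. pmf (proc_step k E v u s) t) = 1 + pmf (proc_step k E v u s0) t"
        using ne0 p1 by simp
      ultimately show ?thesis using True p2 unfolding kk_def by simp
    next
      case False
      have "(\<Sum>s\<in>{t}. pmf (proc_step k E v u s) t) \<le> (\<Sum>s\<in>W. pmf (proc_step k E v u s) t)"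
        by (rule sum_mono2) (use finW tW0 in auto)
      then show ?thesis using False step_pmf_self[where t=t and v=v and u=u, OF tvu] by simp
    qed
  qed
  have ptw: "max 0 (1 / card W' - (\<Sum>s\<in>W. pmf (proc_step k E v u s) t) / card W) \<le> (if b t then gT else gF)"
    if tW: "t \<in> W'" for t
  proof -
    have L: "(\<Sum>s\<in>W. pmf (proc_step k E v u s) t) / M \<ge> (1 + (if b t then 1 / kk else 0)) / M"
      using lower[OF tW] Mpos by (simp add: divide_right_mono)
    have gF0: "gF \<ge> 0" unfolding gF_def using Npos NM by (simp add: frac_le)
    show ?thesis
    proof (cases "b t")
      case True
      hence "(1 + (if b t then 1 / kk else 0)) / M = 1/M + 1/(M*kk)" by (simp add: add_divide_distrib)
      with L True show ?thesis unfolding gT_def N_def[symmetric] M_def[symmetric] by auto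
    next
      case False
      with L gF0 show ?thesis unfolding gF_def N_def[symmetric] M_def[symmetric] by auto
    qed
  qed
  have "(\<Sum>t\<in>W'. max 0 (1 / card W' - (\<Sum>s\<in>W. pmf (proc_step k E v u s) t) / card W))
      \<le> (\<Sum>t\<in>W'. (if b t then gT else gF))"
    by (rule sum_mono[OF ptw])
  also have "\<dots> = (\<Sum>p\<in>P. \<Sum>t\<in>{t\<in>W'. key t = p}. (if b t then gT else gF))"
    by (rule sum.group[symmetric]) (use finW' finP keyP in auto)
  also have "\<dots> = (\<Sum>p\<in>P. \<Sum>t\<in>Om p. (if t \<in> B p then gT else gF))"
  proof (rule sum.cong[OF refl])
    fix p assume pP: "p \<in> P"
    have eq: "{t\<in>W'. key t = p} = Om p"
      using pP unfolding W'def Om_def key_def P_def by auto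
    show "(\<Sum>t\<in>{t\<in>W'. key t = p}. (if b t then gT else gF)) = (\<Sum>t\<in>Om p. (if t \<in> B p then gT else gF))"
      unfolding eq by (rule sum.cong[OF refl]) (auto simp: b_def Om_def key_def)
  qed
  also have "\<dots> = (\<Sum>p\<in>P. real (card (B p)) * gT + (real (card (Om p)) - real (card (B p))) * gF)"
  proof (rule sum.cong[OF refl])
    fix p assume pP: "p \<in> P"
    have sub: "B p \<subseteq> Om p" using BOm[OF pP] .
    have "(\<Sum>t\<in>Om p. (if t \<in> B p then gT else gF)) = (\<Sum>t\<in>B p. gT) + (\<Sum>t\<in>Om p - B p. gF)"
      using sum.If_cases[OF finOm[of p], of "\<lambda>t. t \<in> B p" "\<lambda>_. gT" "\<lambda>_. gF"] sub
      by (simp add: Int_absorb1 Diff_eq[symmetric])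
    also have "\<dots> = real (card (B p)) * gT + (real (card (Om p)) - real (card (B p))) * gF"
      using sub finOm[of p] by (simp add: card_Diff_subset finite_subset of_nat_diff card_mono)
    finally show "(\<Sum>t\<in>Om p. (if t \<in> B p then gT else gF)) = real (card (B p)) * gT + (real (card (Om p)) - real (card (B p))) * gF" .
  qed
  finally have main: "(\<Sum>t\<in>W'. max 0 (1 / card W' - (\<Sum>s\<in>W. pmf (proc_step k E v u s) t) / card W))
      \<le> (\<Sum>p\<in>P. real (card (B p)) * gT + (real (card (Om p)) - real (card (B p))) * gF)" .
  have SO: "(\<Sum>p\<in>P. real (card (Om p))) = N"
  proof -
    have "N = (\<Sum>t\<in>W'. 1)" unfolding N_def by simp
    also have "\<dots> = (\<Sum>p\<in>P. \<Sum>t\<in>{t\<in>W'. key t = p}. 1)"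
      by (rule sum.group[symmetric]) (use finW' finP keyP in auto)
    also have "\<dots> = (\<Sum>p\<in>P. real (card (Om p)))"
    proof (rule sum.cong[OF refl])
      fix p assume pP: "p \<in> P"
      have eq: "{t\<in>W'. key t = p} = Om p"
        using pP unfolding W'def Om_def key_def P_def by auto
      show "(\<Sum>t\<in>{t\<in>W'. key t = p}. 1) = real (card (Om p))" unfolding eq by simp
    qed
    finally show ?thesis by simp
  qed
  have SA: "(\<Sum>p\<in>P. real (card (Oa p))) = kk * (M - N)"
  proof -
    define C where "C c = {\<sigma>\<in>W. \<sigma> v = c \<and> \<sigma> u = c}" for c
    have "(\<Sum>p\<in>P. real (card (Oa p))) = (\<Sum>c\<in>{1..k}. \<Sum>q\<in>{1..k}-{c}. real (card (C c)))"
    proof -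
      have "(\<Sum>c\<in>{1..k}. \<Sum>q\<in>{1..k}-{c}. real (card (C c))) = (\<Sum>(c,q)\<in>P. real (card (C c)))"
        unfolding P_def by (rule sum.Sigma) auto
      also have "\<dots> = (\<Sum>p\<in>P. real (card (Oa p)))"
        by (rule sum.cong[OF refl]) (auto simp: Oa_def C_def)
      finally show ?thesis by simp
    qed
    also have "\<dots> = (\<Sum>c\<in>{1..k}. kk * real (card (C c)))"
      by (rule sum.cong[OF refl]) (auto simp: kk_def of_nat_diff)
    also have "\<dots> = kk * (\<Sum>c\<in>{1..k}. real (card (C c)))" by (simp add: sum_distrib_left)
    also have "(\<Sum>c\<in>{1..k}. real (card (C c))) = (\<Sum>c\<in>{1..k}. \<Sum>t\<in>{t\<in>W-W'. t v = c}. 1)"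
    proof (rule sum.cong[OF refl])
      fix c show "real (card (C c)) = (\<Sum>t\<in>{t\<in>W-W'. t v = c}. 1)"
        unfolding C_def W'def by (simp; intro arg_cong[where f=card]) auto
    qed
    also have "\<dots> = (\<Sum>t\<in>W-W'. 1)"
      by (rule sum.group) (use finW range in auto)
    also have "\<dots> = M - N" unfolding M_def N_def
      using finW W'W by (simp add: card_Diff_subset finite_subset of_nat_diff card_mono)
    finally show ?thesis .
  qed
  define SB where "SB = (\<Sum>p\<in>P. real (card (B p)))"
  have SB1: "SB \<ge> (1-\<alpha>) * N"
  proof -
    have "(1-\<alpha>) * N = (\<Sum>p\<in>P. (1-\<alpha>) * real (card (Om p)))" by (simp add: sum_distrib_left[symmetric] SO)
    also have "\<dots> \<le> SB" unfolding SB_def by (rule sum_mono) (use cB in auto)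
    finally show ?thesis .
  qed
  have SB2: "SB \<ge> (1-\<alpha>) * (kk * (M - N))"
  proof -
    have cAB: "card (A p) = card (B p)" if "p \<in> P" for p using bij[OF that] bij_betw_same_card by blast
    have "(1-\<alpha>) * (kk * (M - N)) = (\<Sum>p\<in>P. (1-\<alpha>) * real (card (Oa p)))" by (simp add: sum_distrib_left[symmetric] SA)
    also have "\<dots> \<le> SB" unfolding SB_def by (rule sum_mono) (use cA cAB in auto)
    finally show ?thesis .
  qed
  have tot: "(\<Sum>p\<in>P. real (card (B p)) * gT + (real (card (Om p)) - real (card (B p))) * gF) = SB * gT + (N - SB) * gF"
    unfolding SB_def SO[symmetric] by (simp add: sum.distrib sum_distrib_right sum_subtractf left_diff_distrib)
  have fin: "SB * gT + (N - SB) * gF \<le> \<alpha>"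
  proof (cases "1/N - 1/M - 1/(M*kk) \<le> 0")
    case True
    hence gT0: "gT = 0" unfolding gT_def by simp
    have gF0: "gF \<ge> 0" unfolding gF_def using Npos NM by (simp add: frac_le)
    have "(N - SB) * gF \<le> (\<alpha> * N) * gF" using SB1 gF0 by (intro mult_right_mono) (auto simp: algebra_simps)
    also have "\<dots> = \<alpha> * ((M - N) / M)" unfolding gF_def using Npos Mpos by (simp add: field_simps)
    also have "\<dots> \<le> \<alpha> * 1" using alpha Npos Mpos NM by (intro mult_left_mono) auto
    finally show ?thesis using gT0 by simp
  next
    case False
    hence gT: "gT = gF - 1/(M*kk)" unfolding gT_def gF_def by simp
    have e1: "SB * gT + (N - SB) * gF = N * gF - SB / (M * kk)" unfolding gT by (simp add: algebra_simps)
    have e2: "N * gF = (M - N) / M" unfolding gF_def using Npos Mpos by (simp add: field_simps)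
    have "SB / (M * kk) \<ge> (1-\<alpha>) * (kk * (M - N)) / (M * kk)"
      using SB2 Mpos kk1 by (intro divide_right_mono) auto
    moreover have "(1-\<alpha>) * (kk * (M - N)) / (M * kk) = (1-\<alpha>) * (M - N) / M"
      using kk1 Mpos by (simp add: field_simps)
    ultimately have e3: "SB / (M * kk) \<ge> (1-\<alpha>) * (M - N) / M" by simp
    have e4: "(M - N) / M - (1-\<alpha>) * (M - N) / M = \<alpha> * ((M - N) / M)" using Mpos by (simp add: field_simps)
    have e5: "\<alpha> * ((M - N) / M) \<le> \<alpha> * 1" using alpha Npos Mpos NM by (intro mult_left_mono) auto
    show ?thesis using e1 e2 e3 e4 e5 by linarith
  qed
  show ?thesis using main tot fin by simp
qed


theorem theorem5:
  fixes V :: "'a set" and k r :: nat and G :: "nat \<Rightarrow> 'a set set"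
    and v u :: "nat \<Rightarrow> 'a" and \<alpha> :: real
  assumes finV: "finite V"
    and graph: "\<forall>e\<in>G r. \<exists>x y. x \<in> V \<and> y \<in> V \<and> x \<noteq> y \<and> e = {x, y}"
    and seq: "\<forall>i<r. v i \<noteq> u i \<and> {v i, u i} \<in> G (Suc i) \<and> G i = G (Suc i) - {{v i, u i}}"
    and nonempty: "colourings V k (G r) \<noteq> {}"
    and alpha: "0 \<le> \<alpha>" "\<alpha> \<le> 1"
    and iso: "\<forall>i<r. \<forall>c\<in>{1..k}. \<forall>q\<in>{1..k}. c \<noteq> q \<longrightarrow>
               alpha_iso_with \<alpha> (colourings_vu V k (G i) (v i) (u i) c c)
                                (colourings_vu V k (G i) (v i) (u i) q c)
                                (\<lambda>\<sigma>. swapH (G i) (v i) \<sigma> q)"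
  shows "tv_dist (pmf_of_set (colourings V k (G r))) (procY V k G v u r) \<le> real r * \<alpha>"
proof -
  define Om where "Om i = colourings V k (G i)" for i
  have Gins: "G (Suc i) = insert {v i, u i} (G i)" if "i < r" for i
    using seq that by auto
  have Gsub: "j \<le> r \<Longrightarrow> G i \<subseteq> G j" if "i \<le> j" for i j
    using that
  proof (induction j rule: dec_induct)
    case base then show ?case by simp
  next
    case (step j) then show ?case using Gins[of j] by auto
  qed
  have vuV: "v i \<in> V \<and> u i \<in> V" if "i < r" for i
  proof -
    have "{v i, u i} \<in> G r" using seq that Gsub[of "Suc i" r] by auto
    then obtain x y where "x \<in> V" "y \<in> V" "{v i, u i} = {x, y}" using graph by blast
    then show ?thesis by (auto simp: doubleton_eq_iff)
  qed
  have finOm: "finite (Om i)" for i unfolding Om_def by (rule finite_colourings[OF finV])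
  have neOm: "Om i \<noteq> {}" if "i \<le> r" for i
    using colourings_anti[OF Gsub[OF that order_refl]] nonempty unfolding Om_def by auto
  define D where "D i = (\<Sum>t\<in>Om i. max 0 (1 / card (Om i) - pmf (procY V k G v u i) t))" for i
  have "D i \<le> real i * \<alpha>" if "i \<le> r" for i
    using that
  proof (induction i)
    case 0
    have p0: "pmf (pmf_of_set (colourings V k (G 0))) t = 1 / card (Om 0)" if "t \<in> Om 0" for t
      using that neOm[of 0] finOm[of 0] by (simp add: Om_def)
    have "D 0 = (\<Sum>t\<in>Om 0. 0)" unfolding D_def
      by (rule sum.cong[OF refl]) (simp add: p0)
    then show ?case by simp
  next
    case (Suc i)
    hence ir: "i < r" by simp
    have eqW': "Om (Suc i) = {\<sigma>\<in>Om i. \<sigma> (v i) \<noteq> \<sigma> (u i)}"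
      unfolding Om_def Gins[OF ir] by (rule colourings_insert) (use seq ir in auto)
    have range: "\<forall>\<sigma>\<in>Om i. \<sigma> (v i) \<in> {1..k} \<and> \<sigma> (u i) \<in> {1..k}"
      using vuV[OF ir] unfolding Om_def colourings_def by (auto simp: PiE_iff)
    have isoi: "\<forall>c\<in>{1..k}. \<forall>q\<in>{1..k}. c \<noteq> q \<longrightarrow> alpha_iso_with \<alpha> {\<sigma>\<in>Om i. \<sigma> (v i) = c \<and> \<sigma> (u i) = c}
                 {\<sigma>\<in>Om i. \<sigma> (v i) = q \<and> \<sigma> (u i) = c} (\<lambda>\<sigma>. swapH (G i) (v i) \<sigma> q)"
    proof (intro ballI impI)
      fix c q assume cq: "c \<in> {1..k}" "q \<in> {1..k}" "c \<noteq> q"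
      show "alpha_iso_with \<alpha> {\<sigma>\<in>Om i. \<sigma> (v i) = c \<and> \<sigma> (u i) = c}
                 {\<sigma>\<in>Om i. \<sigma> (v i) = q \<and> \<sigma> (u i) = c} (\<lambda>\<sigma>. swapH (G i) (v i) \<sigma> q)"
        using iso[rule_format, OF ir cq] unfolding Om_def colourings_vu_def .
    qed
    have c: "(\<Sum>t\<in>Om (Suc i). max 0 (1 / card (Om (Suc i)) - (\<Sum>s\<in>Om i. pmf (proc_step k (G i) (v i) (u i) s) t) / card (Om i))) \<le> \<alpha>"
      by (rule comb[OF finOm eqW' neOm[OF Suc.prems] range alpha isoi])
    have "D (Suc i) \<le> (\<Sum>t\<in>Om (Suc i). max 0 (1 / card (Om (Suc i)) - (\<Sum>s\<in>Om i. pmf (proc_step k (G i) (v i) (u i) s) t) / card (Om i))) + D i"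
      unfolding D_def procY.simps by (rule propagate[OF finOm finOm])
    with c Suc.IH ir show ?case by (simp add: algebra_simps)
  qed
  hence "D r \<le> real r * \<alpha>" by simp
  moreover have "tv_dist (pmf_of_set (Om r)) (procY V k G v u r) \<le> D r"
    unfolding D_def by (rule tv_bound[OF finOm neOm[OF order_refl]])
  ultimately show ?thesis unfolding Om_def by simp
qed

end
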